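(* Let $X$ be an infinite compact metrizable space and $h\colon X\to X$ a minimal homeomorphism, and let $\varepsilon>0$. (1) For any non-empty open $U\subset X$ there is a non-empty open $E\subset U$ with $\mu(E)<\varepsilon$ for all $\mu\in M_h(X)$. (2) For any non-empty open $U\subset X$ with $\partial U$ universally null, there is a closed set $K\subset U$ with $\mathrm{int}(K)\neq\varnothing$ such that $\mu(U\setminus K)<\varepsilon$ for all $\mu\in M_h(X)$. (3) For any non-empty open $U\subset X$ with $\partial U$ universally null, there is an open set $E\subset U$ with $\overline{E}\subset U$ such that $\mu(U\setminus\overline{E})<\varepsilon$ for all $\mu\in M_h(X)$. (4) For any closed $K\subset X$ with $\partial K$ universally null, there is an open set $E\subset X$ with $K\subset E$ and $\mu(E\setminus K)<\varepsilon$ for all $\mu\in M_h(X)$.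
   Context: $M_h(X)$ denotes the set of $h$-invariant Borel probability measures on $X$. A Borel set is universally null if it has measure $0$ for all $\mu\in M_h(X)$. $\partial A$ denotes the boundary of $A$. *)

theory Defs
  imports "HOL-Probability.Probability"
begin

definition minimal_map :: "('a::topological_space \<Rightarrow> 'a) \<Rightarrow> bool" where
  "minimal_map h \<longleftrightarrow> (\<forall>A. closed A \<and> h ` A = A \<longrightarrow> A = {} \<or> A = UNIV)"

definition inv_prob_measures :: "('a::topological_space \<Rightarrow> 'a) \<Rightarrow> 'a measure set" where
  "inv_prob_measures h = {\<mu>. sets \<mu> = sets borel \<and> prob_space \<mu> \<and>
       (\<forall>A\<in>sets borel. emeasure \<mu> (h -` A) = emeasure \<mu> A)}"

definition universally_null :: "('a::topological_space \<Rightarrow> 'a) \<Rightarrow> 'a set \<Rightarrow> bool" where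
  "universally_null h B \<longleftrightarrow> B \<in> sets borel \<and> (\<forall>\<mu>\<in>inv_prob_measures h. emeasure \<mu> B = 0)"

end

theory Submission
  imports Defs
begin


definition adm :: "'a::metric_space set \<Rightarrow> ('a \<Rightarrow> real) set" where
 "adm G = {\<phi>. continuous_on UNIV \<phi> \<and> (\<forall>x. 0 \<le> \<phi> x \<and> \<phi> x \<le> 1) \<and> (\<forall>x. x \<notin> G \<longrightarrow> \<phi> x = 0)}"

definition nu :: "(('a::metric_space \<Rightarrow> real) \<Rightarrow> real) \<Rightarrow> 'a set \<Rightarrow> real" where
 "nu L G = Sup (L ` adm G)"

definition ostar :: "(('a::metric_space \<Rightarrow> real) \<Rightarrow> real) \<Rightarrow> 'a set \<Rightarrow> real" where
 "ostar L A = Inf (nu L ` {W. open W \<and> A \<subseteq> W})"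

locale posfun =
  fixes L :: "('a::metric_space \<Rightarrow> real) \<Rightarrow> real"
  assumes cpt: "compact (UNIV::'a set)"
  and Ladd: "\<And>f g. continuous_on UNIV f \<Longrightarrow> continuous_on UNIV g \<Longrightarrow> L (\<lambda>x. f x + g x) = L f + L g"
  and Lmono: "\<And>f g. continuous_on UNIV f \<Longrightarrow> continuous_on UNIV g \<Longrightarrow> (\<And>x. f x \<le> g x) \<Longrightarrow> L f \<le> L g"
  and Lconst: "\<And>c. L (\<lambda>x. c) = c"
begin

lemma adm_0: "(\<lambda>x. 0) \<in> adm G" by (simp add: adm_def)

lemma adm_le1: "\<phi> \<in> adm G \<Longrightarrow> L \<phi> \<le> 1"
  using Lmono[of \<phi> "\<lambda>x. 1"] Lconst[of 1] by (auto simp: adm_def)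

lemma adm_ge0: "\<phi> \<in> adm G \<Longrightarrow> 0 \<le> L \<phi>"
  using Lmono[of "\<lambda>x. 0" \<phi>] Lconst[of 0] by (auto simp: adm_def)

lemma bdd_adm: "bdd_above (L ` adm G)"
  unfolding bdd_above_def using adm_le1 by auto

lemma nu_ge: "\<phi> \<in> adm G \<Longrightarrow> L \<phi> \<le> nu L G"
  unfolding nu_def by (rule cSup_upper) (auto simp: bdd_adm)

lemma nu_le1: "nu L G \<le> 1"
  unfolding nu_def by (rule cSup_least) (use adm_0 adm_le1 in auto)

lemma nu_ge0: "0 \<le> nu L G"
  using nu_ge[OF adm_0] Lconst[of 0] by simp

lemma nu_least: "(\<And>\<phi>. \<phi> \<in> adm G \<Longrightarrow> L \<phi> \<le> c) \<Longrightarrow> nu L G \<le> c"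
  unfolding nu_def by (rule cSup_least) (use adm_0 in auto)

lemma nu_approx: assumes "t > 0" obtains \<phi> where "\<phi> \<in> adm G" "nu L G - t < L \<phi>"
proof -
  have "\<not> (\<forall>\<phi>\<in>adm G. L \<phi> \<le> nu L G - t)"
    using nu_least[of G "nu L G - t"] assms by force
  then show ?thesis using that by force
qed

lemma adm_mono: "G \<subseteq> G' \<Longrightarrow> adm G \<subseteq> adm G'"
  by (auto simp: adm_def)

lemma nu_mono: "G \<subseteq> G' \<Longrightarrow> nu L G \<le> nu L G'"
  by (rule nu_least) (use adm_mono nu_ge in blast)

lemma nu_empty: "nu L {} = 0"
proof -
  have "\<phi> \<in> adm {} \<Longrightarrow> \<phi> = (\<lambda>x. 0)" for \<phi> :: "'a \<Rightarrow> real" by (auto simp: adm_def)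
  then have "nu L {} \<le> 0" using Lconst[of 0] by (intro nu_least) auto
  then show ?thesis using nu_ge0[of "{}"] by simp
qed

lemma nu_UNIV: "nu L UNIV = 1"
  using nu_ge[of "\<lambda>x. 1" UNIV] nu_le1[of UNIV] Lconst[of 1] by (simp add: adm_def)

lemma Ldiff_le: assumes "continuous_on UNIV f" "continuous_on UNIV g" "\<And>x. f x \<le> g x + c"
  shows "L f \<le> L g + c"
proof -
  have "L f \<le> L (\<lambda>x. g x + c)" using assms by (intro Lmono) (auto intro!: continuous_intros)
  also have "\<dots> = L g + c" using Ladd[of g "\<lambda>x. c"] assms Lconst by auto
  finally show ?thesis .
qed

lemma trunc:
  assumes "\<phi> \<in> adm G" "t > 0"
  defines "\<psi> \<equiv> (\<lambda>x. max (\<phi> x - t) 0)"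
  shows "\<psi> \<in> adm G" "L \<phi> - t \<le> L \<psi>" "closed {x. t \<le> \<phi> x}" "{x. t \<le> \<phi> x} \<subseteq> G"
    "\<And>x. x \<notin> {x. t \<le> \<phi> x} \<Longrightarrow> \<psi> x = 0"
proof -
  have c: "continuous_on UNIV \<phi>" using assms by (auto simp: adm_def)
  then have c2: "continuous_on UNIV \<psi>" unfolding \<psi>_def by (auto intro!: continuous_intros)
  show "\<psi> \<in> adm G" using assms(1,2) c2 unfolding adm_def \<psi>_def by (auto simp: max_def) (smt (verit))
  have "\<And>x. \<phi> x \<le> \<psi> x + t" by (auto simp: \<psi>_def)
  then have "L \<phi> \<le> L \<psi> + t" by (rule Ldiff_le[OF c c2])
  then show "L \<phi> - t \<le> L \<psi>" by linarith
  show "closed {x. t \<le> \<phi> x}" using c by (intro closed_Collect_le) (auto intro!: continuous_intros)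
  show "{x. t \<le> \<phi> x} \<subseteq> G" using assms by (auto simp: adm_def)
  show "\<And>x. x \<notin> {x. t \<le> \<phi> x} \<Longrightarrow> \<psi> x = 0" by (auto simp: \<psi>_def)
qed


lemma L0: "L (\<lambda>x. 0) = 0" using Lconst[of 0] .

lemma compact_closed: "closed F \<Longrightarrow> compact (F::'a set)"
  using cpt compact_Int_closed[of UNIV F] by simp

lemma min_split: "0 \<le> (u::real) \<Longrightarrow> 0 \<le> v \<Longrightarrow> p \<le> u + v \<Longrightarrow> 0 \<le> p \<Longrightarrow> p \<le> min p u + min p v"
  by (auto simp: min_def)

lemma nu_sub2:
  assumes "open W1" "open W2"
  shows "nu L (W1 \<union> W2) \<le> nu L W1 + nu L W2"
proof (cases "W1 = UNIV \<or> W2 = UNIV")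
  case True
  then show ?thesis using nu_ge0[of W1] nu_ge0[of W2] by auto
next
  case False
  then have ne1: "- W1 \<noteq> {}" and ne2: "- W2 \<noteq> {}" by auto
  have cl1: "closed (- W1)" "closed (- W2)" using assms by auto
  show ?thesis
  proof (rule nu_least)
    fix \<phi> assume \<phi>: "\<phi> \<in> adm (W1 \<union> W2)"
    show "L \<phi> \<le> nu L W1 + nu L W2"
    proof (rule field_le_epsilon)
      fix t :: real assume t: "0 < t"
      define \<psi> where "\<psi> = (\<lambda>x. max (\<phi> x - t) 0)"
      define F where "F = {x. t \<le> \<phi> x}"
      have \<psi>: "\<psi> \<in> adm (W1 \<union> W2)" "L \<phi> - t \<le> L \<psi>" "closed F" "F \<subseteq> W1 \<union> W2"
        "\<And>x. x \<notin> F \<Longrightarrow> \<psi> x = 0"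
        unfolding \<psi>_def F_def by (rule trunc[OF \<phi> t])+
      have \<psi>c: "continuous_on UNIV \<psi>" and \<psi>01: "\<And>x. 0 \<le> \<psi> x \<and> \<psi> x \<le> 1" using \<psi>(1) by (auto simp: adm_def)
      have "L \<psi> \<le> nu L W1 + nu L W2"
      proof (cases "F = {}")
        case True
        then have "\<psi> = (\<lambda>x. 0)" using \<psi>(5) by auto
        then show ?thesis using L0 nu_ge0[of W1] nu_ge0[of W2] by simp
      next
        case Fne: False
        define a where "a = (\<lambda>x. infdist x (- W1))"
        define b where "b = (\<lambda>x. infdist x (- W2))"
        have ca: "continuous_on UNIV a" "continuous_on UNIV b"
          unfolding a_def b_def by (auto intro!: continuous_intros)
        obtain x0 where x0: "x0 \<in> F" "\<forall>y\<in>F. a x0 + b x0 \<le> a y + b y"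
          using continuous_attains_inf[OF compact_closed[OF \<psi>(3)] Fne, of "\<lambda>x. a x + b x"] ca
          by (auto intro: continuous_on_subset continuous_intros)
        define c where "c = a x0 + b x0"
        have "c > 0"
        proof -
          have "x0 \<in> W1 \<or> x0 \<in> W2" using x0(1) \<psi>(4) by auto
          moreover have "0 \<le> a x0" "0 \<le> b x0" by (auto simp: a_def b_def infdist_nonneg)
          moreover have "x0 \<in> W1 \<Longrightarrow> 0 < a x0" unfolding a_def
            using infdist_pos_not_in_closed[OF cl1(1) ne1] by auto
          moreover have "x0 \<in> W2 \<Longrightarrow> 0 < b x0" unfolding b_def
            using infdist_pos_not_in_closed[OF cl1(2) ne2] by auto
          ultimately show ?thesis unfolding c_def by linarith
        qed
        define \<psi>1 where "\<psi>1 = (\<lambda>x. min (\<psi> x) (a x / c))"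
        define \<psi>2 where "\<psi>2 = (\<lambda>x. min (\<psi> x) (b x / c))"
        have a0: "\<And>x. 0 \<le> a x" "\<And>x. 0 \<le> b x" by (auto simp: a_def b_def infdist_nonneg)
        have c12: "continuous_on UNIV \<psi>1" "continuous_on UNIV \<psi>2"
          unfolding \<psi>1_def \<psi>2_def using ca \<psi>c \<open>c > 0\<close> by (auto intro!: continuous_intros)
        have ad1: "\<psi>1 \<in> adm W1"
          unfolding adm_def \<psi>1_def using c12(1) \<psi>01 a0 \<open>c > 0\<close>
          by (auto simp: a_def infdist_zero \<psi>1_def min_le_iff_disj)
        have ad2: "\<psi>2 \<in> adm W2"
          unfolding adm_def \<psi>2_def using c12(2) \<psi>01 a0 \<open>c > 0\<close>
          by (auto simp: b_def infdist_zero \<psi>2_def min_le_iff_disj)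
        have "\<psi> x \<le> \<psi>1 x + \<psi>2 x" for x
        proof (cases "x \<in> F")
          case True
          then have "c \<le> a x + b x" using x0 c_def by auto
          then have "1 \<le> a x / c + b x / c" using \<open>c > 0\<close> by (simp add: add_divide_distrib[symmetric])
          then show ?thesis unfolding \<psi>1_def \<psi>2_def
            using min_split[of "a x / c" "b x / c" "\<psi> x"] \<psi>01[of x] a0[of x] \<open>c > 0\<close> by auto
        next
          case False
          then show ?thesis using \<psi>(5)[OF False] a0[of x] \<open>c > 0\<close> by (auto simp: \<psi>1_def \<psi>2_def)
        qed
        then have "L \<psi> \<le> L (\<lambda>x. \<psi>1 x + \<psi>2 x)"
          using c12 \<psi>c by (intro Lmono) (auto intro!: continuous_intros)
        also have "\<dots> = L \<psi>1 + L \<psi>2" using Ladd c12 by auto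
        also have "\<dots> \<le> nu L W1 + nu L W2" using nu_ge[OF ad1] nu_ge[OF ad2] by linarith
        finally show ?thesis .
      qed
      then show "L \<phi> \<le> nu L W1 + nu L W2 + t" using \<psi>(2) by linarith
    qed
  qed
qed


lemma nu_finite:
  assumes "\<And>i. open (W i)"
  shows "nu L (\<Union>i<(n::nat). W i) \<le> (\<Sum>i<n. nu L (W i))"
proof (induction n)
  case 0
  then show ?case using nu_empty by simp
next
  case (Suc n)
  have eq: "(\<Union>i<Suc n. W i) = (\<Union>i<n. W i) \<union> W n"
    unfolding lessThan_Suc image_insert Union_insert by (rule Un_commute)
  have "open (\<Union>i<n. W i)" by (rule open_UN) (use assms in blast)
  then have "nu L ((\<Union>i<n. W i) \<union> W n) \<le> nu L (\<Union>i<n. W i) + nu L (W n)"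
    using nu_sub2 assms by blast
  then show ?case using Suc unfolding eq by simp
qed

lemma nu_countable:
  fixes W :: "nat \<Rightarrow> 'a set"
  assumes "\<And>i. open (W i)" "\<And>n. (\<Sum>i<n. nu L (W i)) \<le> S"
  shows "nu L (\<Union>i. W i) \<le> S"
proof (rule nu_least)
  fix \<phi> assume \<phi>: "\<phi> \<in> adm (\<Union>i. W i)"
  show "L \<phi> \<le> S"
  proof (rule field_le_epsilon)
    fix t :: real assume t: "0 < t"
    define \<psi> where "\<psi> = (\<lambda>x. max (\<phi> x - t) 0)"
    define F where "F = {x. t \<le> \<phi> x}"
    have \<psi>: "\<psi> \<in> adm (\<Union>i. W i)" "L \<phi> - t \<le> L \<psi>" "closed F" "F \<subseteq> (\<Union>i. W i)"
      "\<And>x. x \<notin> F \<Longrightarrow> \<psi> x = 0"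
      unfolding \<psi>_def F_def by (rule trunc[OF \<phi> t])+
    obtain I where I: "finite I" "F \<subseteq> \<Union>(W ` I)"
    proof (rule compactE_image[OF compact_closed[OF \<psi>(3)], of UNIV W])
      show "\<And>T. T \<in> UNIV \<Longrightarrow> open (W T)" by (rule assms(1))
      show "F \<subseteq> \<Union>(W ` UNIV)" by (rule \<psi>(4))
      fix C' assume "C' \<subseteq> UNIV" "finite C'" "F \<subseteq> \<Union>(W ` C')"
      then show thesis using that by blast
    qed
    obtain n where "I \<subseteq> {..<n}" using finite_nat_bounded[OF I(1)] by auto
    then have Fn: "F \<subseteq> (\<Union>i<n. W i)" using I(2) by blast
    have "\<psi> \<in> adm (\<Union>i<n. W i)" using \<psi>(1,5) Fn unfolding adm_def mem_Collect_eq by (metis subsetD)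
    then have "L \<psi> \<le> nu L (\<Union>i<n. W i)" by (rule nu_ge)
    also have "\<dots> \<le> (\<Sum>i<n. nu L (W i))" by (rule nu_finite[OF assms(1)])
    also have "\<dots> \<le> S" by (rule assms(2))
    finally show "L \<phi> \<le> S + t" using \<psi>(2) by linarith
  qed
qed

lemma bdd_nu: "bdd_below (nu L ` S)"
  unfolding bdd_below_def using nu_ge0 by blast

lemma ostar_le: "open W \<Longrightarrow> A \<subseteq> W \<Longrightarrow> ostar L A \<le> nu L W"
  unfolding ostar_def by (rule cInf_lower[OF _ bdd_nu]) blast

lemma ostar_greatest:
  assumes "\<And>W. open W \<Longrightarrow> A \<subseteq> W \<Longrightarrow> c \<le> nu L W"
  shows "c \<le> ostar L A"
proof -
  have ne: "nu L ` {W. open W \<and> A \<subseteq> W} \<noteq> {}"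
  proof -
    have "UNIV \<in> {W. open W \<and> A \<subseteq> W}" by simp
    then show ?thesis by blast
  qed
  show ?thesis unfolding ostar_def
    by (rule cInf_greatest[OF ne]) (use assms in blast)
qed

lemma ostar_ge0: "0 \<le> ostar L A"
  using nu_ge0 by (intro ostar_greatest) auto

lemma ostar_le1: "ostar L A \<le> 1"
  using ostar_le[of UNIV A] nu_le1[of UNIV] by auto

lemma ostar_open: "open W \<Longrightarrow> ostar L W = nu L W"
  using ostar_le[of W W] ostar_greatest[of W "nu L W"] nu_mono by (auto intro: antisym)

lemma ostar_mono: "A \<subseteq> B \<Longrightarrow> ostar L A \<le> ostar L B"
  by (rule ostar_greatest) (auto intro: ostar_le)

lemma ostar_approx:
  assumes "t > 0" obtains W where "open W" "A \<subseteq> W" "nu L W < ostar L A + t"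
proof -
  have "\<not> (ostar L A + t \<le> ostar L A)" using assms by simp
  have "\<exists>W. open W \<and> A \<subseteq> W \<and> \<not> ostar L A + t \<le> nu L W"
  proof (rule ccontr)
    assume "\<not> ?thesis"
    then have "\<And>W. open W \<Longrightarrow> A \<subseteq> W \<Longrightarrow> ostar L A + t \<le> nu L W" by blast
    then have "ostar L A + t \<le> ostar L A" by (rule ostar_greatest)
    then show False using assms by simp
  qed
  then obtain W where "open W" "A \<subseteq> W" "\<not> ostar L A + t \<le> nu L W" by blast
  then show ?thesis using that by (simp add: not_le)
qed

lemma ostar_empty: "ostar L {} = 0"
  using ostar_open[of "{}"] nu_empty by simp

lemma ostar_UNIV: "ostar L UNIV = 1"
  using ostar_open[of UNIV] nu_UNIV by simp

lemma ostar_sub2: "ostar L (A \<union> B) \<le> ostar L A + ostar L B"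
proof (rule field_le_epsilon)
  fix t :: real assume t: "t > 0"
  obtain W1 where W1: "open W1" "A \<subseteq> W1" "nu L W1 < ostar L A + t/2" using ostar_approx[of "t/2" A] t by auto
  obtain W2 where W2: "open W2" "B \<subseteq> W2" "nu L W2 < ostar L B + t/2" using ostar_approx[of "t/2" B] t by auto
  have "ostar L (A \<union> B) \<le> nu L (W1 \<union> W2)" using W1 W2 by (intro ostar_le) auto
  also have "\<dots> \<le> nu L W1 + nu L W2" using nu_sub2 W1 W2 by auto
  finally show "ostar L (A \<union> B) \<le> ostar L A + ostar L B + t" using W1 W2 by linarith
qed

end


lemma geo_bound: assumes t: "(t::real) > 0" shows "(\<Sum>i<n. t / 2 ^ Suc i) \<le> t"
proof -
  have "(\<Sum>i<n. t / 2 ^ Suc i) = t * (1 - (1/2)^n)"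
    by (induction n) (simp_all add: field_simps)
  moreover have "0 \<le> t * (1/2::real)^n" using t by simp
  ultimately show ?thesis by (simp add: right_diff_distrib)
qed
context posfun begin
lemma ostar_countable:
  assumes "summable (\<lambda>i. ostar L (A i))"
  shows "ostar L (\<Union>i. A i) \<le> (\<Sum>i. ostar L (A i))"
proof (rule field_le_epsilon)
  fix t :: real assume t: "t > 0"
  have "\<forall>i. \<exists>W. open W \<and> A i \<subseteq> W \<and> nu L W < ostar L (A i) + t / 2 ^ Suc i"
  proof
    fix i
    have "t / 2 ^ Suc i > 0" using t by simp
    then obtain W where "open W" "A i \<subseteq> W" "nu L W < ostar L (A i) + t / 2 ^ Suc i"
      by (rule ostar_approx)
    then show "\<exists>W. open W \<and> A i \<subseteq> W \<and> nu L W < ostar L (A i) + t / 2 ^ Suc i"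
      by blast
  qed
  note ex = this
  define W where "W = (\<lambda>i. SOME V. open V \<and> A i \<subseteq> V \<and> nu L V < ostar L (A i) + t / 2 ^ Suc i)"
  have W': "open (W i) \<and> A i \<subseteq> W i \<and> nu L (W i) < ostar L (A i) + t / 2 ^ Suc i" for i
    unfolding W_def by (rule someI_ex) (rule ex[rule_format])
  have W: "\<And>i. open (W i)" "\<And>i. A i \<subseteq> W i" "\<And>i. nu L (W i) < ostar L (A i) + t / 2 ^ Suc i"
    using W' by blast+
  note geo = geo_bound[OF t]
  have "\<And>n. (\<Sum>i<n. nu L (W i)) \<le> (\<Sum>i. ostar L (A i)) + t"
  proof -
    fix n
    have "(\<Sum>i<n. nu L (W i)) \<le> (\<Sum>i<n. ostar L (A i) + t / 2 ^ Suc i)"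
      using W(3) by (intro sum_mono) (simp add: less_imp_le)
    also have "\<dots> = (\<Sum>i<n. ostar L (A i)) + (\<Sum>i<n. t / 2 ^ Suc i)" by (simp add: sum.distrib)
    also have "(\<Sum>i<n. ostar L (A i)) \<le> (\<Sum>i. ostar L (A i))"
      using assms ostar_ge0 by (intro sum_le_suminf) auto
    finally show "(\<Sum>i<n. nu L (W i)) \<le> (\<Sum>i. ostar L (A i)) + t" using geo[of n] by linarith
  qed
  note sums = this
  have "nu L (\<Union>i. W i) \<le> (\<Sum>i. ostar L (A i)) + t" by (rule nu_countable[OF W(1) sums])
  moreover have "open (\<Union>i. W i)" by (intro open_UN ballI W(1))
  moreover have "(\<Union>i. A i) \<subseteq> (\<Union>i. W i)" using W(2) by blast
  ultimately have "ostar L (\<Union>i. A i) \<le> (\<Sum>i. ostar L (A i)) + t"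
    using ostar_le[of "\<Union>i. W i" "\<Union>i. A i"] by linarith
  then show "ostar L (\<Union>i. A i) \<le> (\<Sum>i. ostar L (A i)) + t" .
qed

lemma ostar_carath:
  assumes G: "open G"
  shows "ostar L (A \<inter> G) + ostar L (A - G) \<le> ostar L A"
proof (rule field_le_epsilon)
  fix e :: real assume e: "e > 0"
  define t where "t = e / 4"
  have t: "t > 0" using e by (simp add: t_def)
  obtain W where W: "open W" "A \<subseteq> W" "nu L W < ostar L A + t" using ostar_approx[OF t] by blast
  obtain \<phi> where \<phi>: "\<phi> \<in> adm (W \<inter> G)" "nu L (W \<inter> G) - t < L \<phi>" using nu_approx[OF t] by blast
  define \<psi> where "\<psi> = (\<lambda>x. max (\<phi> x - t) 0)"
  define F where "F = {x. t \<le> \<phi> x}"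
  have \<psi>: "\<psi> \<in> adm (W \<inter> G)" "L \<phi> - t \<le> L \<psi>" "closed F" "F \<subseteq> W \<inter> G"
    "\<And>x. x \<notin> F \<Longrightarrow> \<psi> x = 0"
    unfolding \<psi>_def F_def by (rule trunc[OF \<phi>(1) t])+
  have oWF: "open (W - F)" using W(1) \<psi>(3) by auto
  obtain \<eta> where \<eta>: "\<eta> \<in> adm (W - F)" "nu L (W - F) - t < L \<eta>" using nu_approx[OF t] by blast
  have cc: "continuous_on UNIV \<psi>" "continuous_on UNIV \<eta>" using \<psi>(1) \<eta>(1) by (auto simp: adm_def)
  have "(\<lambda>x. \<psi> x + \<eta> x) \<in> adm W"
    unfolding adm_def
  proof (intro CollectI conjI allI impI)
    show "continuous_on UNIV (\<lambda>x. \<psi> x + \<eta> x)" using cc by (auto intro!: continuous_intros)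
    fix x
    show "0 \<le> \<psi> x + \<eta> x" using \<psi>(1) \<eta>(1) by (auto simp: adm_def add_nonneg_nonneg)
    show "\<psi> x + \<eta> x \<le> 1"
    proof (cases "x \<in> F")
      case True
      then have "\<eta> x = 0" using \<eta>(1) by (auto simp: adm_def)
      then show ?thesis using \<psi>(1) by (auto simp: adm_def)
    next
      case False
      then show ?thesis using \<psi>(5) \<eta>(1) by (auto simp: adm_def)
    qed
  next
    fix x assume "x \<notin> W"
    then show "\<psi> x + \<eta> x = 0" using \<psi>(1) \<eta>(1) by (auto simp: adm_def)
  qed
  then have "L (\<lambda>x. \<psi> x + \<eta> x) \<le> nu L W" by (rule nu_ge)
  then have "L \<psi> + L \<eta> \<le> nu L W" using Ladd cc by auto
  moreover have "ostar L (A \<inter> G) \<le> nu L (W \<inter> G)" using W G by (intro ostar_le) auto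
  moreover have "ostar L (A - G) \<le> nu L (W - F)" using W \<psi>(4) oWF by (intro ostar_le) auto
  ultimately show "ostar L (A \<inter> G) + ostar L (A - G) \<le> ostar L A + e"
    using W(3) \<phi>(2) \<eta>(2) \<psi>(2) t_def by linarith
qed

end

context posfun begin

lemma oms: "outer_measure_space (Pow UNIV) (\<lambda>A. ennreal (ostar L A))"
  unfolding outer_measure_space_def
proof (intro conjI)
  show "positive (Pow UNIV) (\<lambda>A. ennreal (ostar L A))"
    by (simp add: positive_def ostar_empty)
  show "increasing (Pow UNIV) (\<lambda>A. ennreal (ostar L A))"
    by (auto simp: increasing_def intro!: ennreal_leI ostar_mono)
  show "countably_subadditive (Pow UNIV) (\<lambda>A. ennreal (ostar L A))"
    unfolding countably_subadditive_def
  proof (intro allI impI)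
    fix A :: "nat \<Rightarrow> 'a set"
    show "ennreal (ostar L (\<Union>i. A i)) \<le> (\<Sum>i. ennreal (ostar L (A i)))"
    proof (cases "(\<Sum>i. ennreal (ostar L (A i))) = top")
      case True
      show ?thesis by (subst True) (rule top_greatest)
    next
      case False
      have s: "summable (\<lambda>i. ostar L (A i))"
        by (rule summable_suminf_not_top[OF ostar_ge0 False])
      have eq: "(\<Sum>i. ennreal (ostar L (A i))) = ennreal (\<Sum>i. ostar L (A i))"
        by (rule suminf_ennreal[OF ostar_ge0 False])
      show ?thesis unfolding eq by (rule ennreal_leI[OF ostar_countable[OF s]])
    qed
  qed
qed

lemma open_lambda:
  assumes "open G"
  shows "G \<in> lambda_system UNIV (Pow UNIV) (\<lambda>A. ennreal (ostar L A))"
  unfolding lambda_system_def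
proof (intro CollectI conjI ballI)
  show "G \<in> Pow UNIV" by simp
  fix x :: "'a set"
  have eq: "(UNIV - G) \<inter> x = x - G" by auto
  have "ostar L x \<le> ostar L (G \<inter> x) + ostar L (x - G)"
    using ostar_sub2[of "G \<inter> x" "x - G"] by (metis Int_Diff_Un Int_commute)
  moreover have "ostar L (x \<inter> G) + ostar L (x - G) \<le> ostar L x" by (rule ostar_carath[OF assms])
  ultimately have "ostar L (G \<inter> x) + ostar L (x - G) = ostar L x" by (simp add: Int_commute)
  then show "ennreal (ostar L (G \<inter> x)) + ennreal (ostar L ((UNIV - G) \<inter> x)) = ennreal (ostar L x)"
    unfolding eq using ostar_ge0 by (simp flip: ennreal_plus)
qed

lemma exists_measure:
  "\<exists>M. sets M = sets borel \<and> (\<forall>A\<in>sets borel. emeasure M A = ennreal (ostar L A))"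
proof -
  define f where "f = (\<lambda>A. ennreal (ostar L A))"
  define Lam where "Lam = lambda_system UNIV (Pow UNIV) f"
  have ms: "measure_space UNIV Lam f"
    unfolding Lam_def f_def by (rule sigma_algebra.caratheodory_lemma[OF sigma_algebra_Pow oms])
  then have sa: "sigma_algebra UNIV Lam" by (simp add: measure_space_def)
  have "sets borel \<subseteq> Lam"
    unfolding sets_borel using open_lambda
    by (intro sigma_algebra.sigma_sets_subset[OF sa]) (auto simp: Lam_def f_def)
  moreover have sab: "sigma_algebra UNIV (sets (borel :: 'a measure))"
    using sets.sigma_algebra_axioms[of borel] by simp
  ultimately have ms2: "measure_space UNIV (sets borel) f"
    using measure_down[OF ms] by blast
  define M where "M = measure_of UNIV (sets borel) f"
  have "sets M = sets borel" unfolding M_def using sigma_algebra.sets_measure_of_eq[OF sab] .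
  moreover have "\<forall>A\<in>sets borel. emeasure M A = f A"
    using ms2 unfolding measure_space_def M_def by (auto intro: emeasure_measure_of_sigma)
  ultimately show ?thesis unfolding f_def by blast
qed

end

context posfun begin

lemma nu_pre:
  assumes hom: "homeomorphism UNIV UNIV h g"
    and Linv: "\<And>f. continuous_on UNIV f \<Longrightarrow> L (\<lambda>x. f (h x)) = L f"
    and V: "open V"
  shows "nu L (h -` V) = nu L V"
proof -
  have hg: "\<And>x. g (h x) = x" "\<And>y. h (g y) = y" and ch: "continuous_on UNIV h" and cg: "continuous_on UNIV g"
    using hom by (auto simp: homeomorphism_def)
  have "nu L V \<le> nu L (h -` V)"
  proof (rule nu_least)
    fix \<phi> assume \<phi>: "\<phi> \<in> adm V"
    have c: "continuous_on UNIV \<phi>" using \<phi> by (simp add: adm_def)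
    have "(\<lambda>x. \<phi> (h x)) \<in> adm (h -` V)" using \<phi> continuous_on_compose2[OF c ch] by (auto simp: adm_def)
    then show "L \<phi> \<le> nu L (h -` V)" using nu_ge Linv[OF c] by metis
  qed
  moreover have "nu L (h -` V) \<le> nu L V"
  proof (rule nu_least)
    fix \<psi> assume \<psi>: "\<psi> \<in> adm (h -` V)"
    have c: "continuous_on UNIV \<psi>" using \<psi> by (simp add: adm_def)
    have c2: "continuous_on UNIV (\<lambda>y. \<psi> (g y))" using continuous_on_compose2[OF c cg] by auto
    have "(\<lambda>y. \<psi> (g y)) \<in> adm V" using \<psi> c2 hg by (auto simp: adm_def)
    then have "L (\<lambda>y. \<psi> (g y)) \<le> nu L V" by (rule nu_ge)
    moreover have "L (\<lambda>x. \<psi> (g (h x))) = L (\<lambda>y. \<psi> (g y))" by (rule Linv[OF c2])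
    ultimately show "L \<psi> \<le> nu L V" using hg by simp
  qed
  ultimately show ?thesis by simp
qed

lemma ostar_pre:
  assumes hom: "homeomorphism UNIV UNIV h g"
    and Linv: "\<And>f. continuous_on UNIV f \<Longrightarrow> L (\<lambda>x. f (h x)) = L f"
  shows "ostar L (h -` A) = ostar L A"
proof -
  have hg: "\<And>x. g (h x) = x" "\<And>y. h (g y) = y" and ch: "continuous_on UNIV h" and cg: "continuous_on UNIV g"
    using hom by (auto simp: homeomorphism_def)
  have "ostar L (h -` A) \<le> ostar L A"
  proof (rule ostar_greatest)
    fix W assume W: "open W" "A \<subseteq> W"
    have "open (h -` W)" using W(1) ch by (simp add: open_vimage)
    then have "ostar L (h -` A) \<le> nu L (h -` W)" using W(2) by (intro ostar_le) auto
    then show "ostar L (h -` A) \<le> nu L W" using nu_pre[OF hom Linv W(1)] by simp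
  qed
  moreover have "ostar L A \<le> ostar L (h -` A)"
  proof (rule ostar_greatest)
    fix W assume W: "open W" "h -` A \<subseteq> W"
    have oV: "open (g -` W)" using W(1) cg by (simp add: open_vimage)
    have "A \<subseteq> g -` W" using W(2) hg by (auto) (metis subsetD vimageI2)
    then have "ostar L A \<le> nu L (g -` W)" using oV by (intro ostar_le) auto
    also have "\<dots> = nu L (h -` (g -` W))" using nu_pre[OF hom Linv oV] by simp
    also have "h -` (g -` W) = W" using hg by auto
    finally show "ostar L A \<le> nu L W" .
  qed
  ultimately show ?thesis by simp
qed

lemma inv_measure:
  assumes hom: "homeomorphism UNIV UNIV h g"
    and Linv: "\<And>f. continuous_on UNIV f \<Longrightarrow> L (\<lambda>x. f (h x)) = L f"
  shows "\<exists>M\<in>inv_prob_measures h. \<forall>A\<in>sets borel. emeasure M A = ennreal (ostar L A)"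
proof -
  obtain M where M: "sets M = sets borel" "\<forall>A\<in>sets borel. emeasure M A = ennreal (ostar L A)"
    using exists_measure by blast
  have ch: "continuous_on UNIV h" using hom by (auto simp: homeomorphism_def)
  have hm: "h \<in> borel_measurable borel" using ch by (rule borel_measurable_continuous_onI)
  have sp: "space M = UNIV" using M(1) sets_eq_imp_space_eq[OF M(1)] by simp
  have "prob_space M"
    by (rule prob_spaceI) (simp add: sp M(2) ostar_UNIV)
  moreover have "\<forall>A\<in>sets borel. emeasure M (h -` A) = emeasure M A"
  proof
    fix A :: "'a set" assume A: "A \<in> sets borel"
    have "h -` A \<in> sets borel" using measurable_sets[OF hm A] by simp
    then show "emeasure M (h -` A) = emeasure M A"
      using M(2) A ostar_pre[OF hom Linv] by simp
  qed
  ultimately have "M \<in> inv_prob_measures h" using M(1) by (simp add: inv_prob_measures_def)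
  then show ?thesis using M(2) by blast
qed

end


lemma cont_bounded:
  assumes "compact (UNIV :: 'a::metric_space set)" "continuous_on UNIV (f :: 'a \<Rightarrow> real)"
  shows "\<exists>B. \<forall>x. \<bar>f x\<bar> \<le> B"
proof -
  have "compact (f ` UNIV)" using assms compact_continuous_image by blast
  then have "bounded (f ` UNIV)" by (rule compact_imp_bounded)
  then show ?thesis unfolding bounded_real by auto
qed

lemma cont_integrable:
  assumes "compact (UNIV :: 'a::metric_space set)" "continuous_on UNIV (f :: 'a \<Rightarrow> real)"
    and "prob_space M" "sets M = sets borel"
  shows "integrable M f"
proof -
  obtain B where B: "\<forall>x. \<bar>f x\<bar> \<le> B" using cont_bounded[OF assms(1,2)] by blast
  have m: "f \<in> borel_measurable M" unfolding measurable_cong_sets[OF assms(4) refl]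
    using assms(2) by (rule borel_measurable_continuous_onI)
  show ?thesis
    by (rule finite_measure.integrable_const_bound[OF prob_space.finite_measure[OF assms(3)] _ m, of B])
       (use B in auto)
qed

lemma integral_bound:
  assumes "compact (UNIV :: 'a::metric_space set)" "continuous_on UNIV (f :: 'a \<Rightarrow> real)"
    and "prob_space M" "sets M = sets borel" "\<forall>x. \<bar>f x\<bar> \<le> B"
  shows "\<bar>integral\<^sup>L M f\<bar> \<le> B"
proof -
  have i: "integrable M f" using cont_integrable[OF assms(1-4)] .
  have ic: "integrable M (\<lambda>x. B)"
    using prob_space.finite_measure[OF assms(3)] by (rule finite_measure.integrable_const)
  have "(\<integral>x. \<bar>f x\<bar> \<partial>M) \<le> integral\<^sup>L M (\<lambda>x. B)"
    by (rule integral_mono[OF integrable_abs[OF i] ic]) (use assms(5) in simp)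
  then have "\<bar>integral\<^sup>L M f\<bar> \<le> integral\<^sup>L M (\<lambda>x. B)"
    using integral_abs_bound[of M f] by linarith
  also have "\<dots> = B" using prob_space.prob_space[OF assms(3)] by simp
  finally show ?thesis .
qed

lemma integral_const_prob: "prob_space M \<Longrightarrow> integral\<^sup>L M (\<lambda>x. c) = (c::real)"
  using prob_space.prob_space[of M] by simp

lemma integral_inv:
  assumes "compact (UNIV :: 'a::metric_space set)" "continuous_on UNIV (f :: 'a \<Rightarrow> real)"
    and M: "M \<in> inv_prob_measures h" and ch: "continuous_on UNIV h"
  shows "integral\<^sup>L M (\<lambda>x. f (h x)) = integral\<^sup>L M f"
proof -
  have sM: "sets M = sets borel" "prob_space M"
    and inv: "\<forall>A\<in>sets borel. emeasure M (h -` A) = emeasure M A"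
    using M by (auto simp: inv_prob_measures_def)
  have sp: "space M = UNIV" using sets_eq_imp_space_eq[OF sM(1)] by simp
  have hm: "h \<in> M \<rightarrow>\<^sub>M borel" unfolding measurable_cong_sets[OF sM(1) refl]
    using ch by (rule borel_measurable_continuous_onI)
  have "distr M borel h = M"
  proof (rule measure_eqI)
    show "sets (distr M borel h) = sets M" using sM by simp
    fix A assume "A \<in> sets (distr M borel h)"
    then have A: "A \<in> sets borel" by simp
    show "emeasure (distr M borel h) A = emeasure M A"
      using emeasure_distr[OF hm A] inv A sp by simp
  qed
  moreover have "f \<in> borel_measurable borel" using assms(2) by (rule borel_measurable_continuous_onI)
  ultimately show ?thesis using integral_distr[OF hm] by metis
qed



lemma urysohn_adm:
  fixes W K :: "'a::metric_space set"
  assumes W: "open W" and K: "closed K" "K \<subseteq> W"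
  obtains \<phi> where "\<phi> \<in> adm W" "\<And>x. indicator K x \<le> \<phi> x"
proof (cases "W = UNIV")
  case True
  have "(\<lambda>x. 1) \<in> adm W" by (simp add: adm_def True)
  moreover have "\<And>x. indicator K x \<le> (1::real)" by (simp add: indicator_def)
  ultimately show ?thesis using that by blast
next
  case Wne: False
  show ?thesis
  proof (cases "K = {}")
    case True
    have "(\<lambda>x. 0) \<in> adm W" by (simp add: adm_def)
    then show ?thesis using that True by auto
  next
    case Kne: False
    define a where "a = (\<lambda>x. infdist x (- W))"
    define b where "b = (\<lambda>x. infdist x K)"
    have cl: "closed (- W)" using W by auto
    have ne: "- W \<noteq> {}" using Wne by auto
    have a0: "\<And>x. 0 \<le> a x" "\<And>x. 0 \<le> b x" by (auto simp: a_def b_def infdist_nonneg)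
    have apos: "x \<in> W \<Longrightarrow> 0 < a x" for x unfolding a_def using infdist_pos_not_in_closed[OF cl ne] by auto
    have bpos: "x \<notin> K \<Longrightarrow> 0 < b x" for x unfolding b_def using infdist_pos_not_in_closed[OF K(1) Kne] by auto
    have pos: "0 < a x + b x" for x
    proof (cases "x \<in> W")
      case True then show ?thesis using apos[of x] a0[of x] by linarith
    next
      case False then have "x \<notin> K" using K by auto
      then show ?thesis using bpos[of x] a0[of x] by linarith
    qed
    define \<phi> where "\<phi> = (\<lambda>x. a x / (a x + b x))"
    have c: "continuous_on UNIV \<phi>"
      unfolding \<phi>_def a_def b_def
      using pos unfolding a_def b_def
      by (intro continuous_on_divide continuous_intros) (auto simp: less_le)
    have "\<phi> \<in> adm W"
      unfolding adm_def
    proof (intro CollectI conjI allI impI c)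
      fix x
      show "0 \<le> \<phi> x" using a0[of x] pos[of x] by (simp add: \<phi>_def)
      show "\<phi> x \<le> 1" using a0[of x] a0(2)[of x] pos[of x] by (simp add: \<phi>_def divide_le_eq_1)
    next
      fix x assume "x \<notin> W"
      then have "a x = 0" by (simp add: a_def infdist_zero)
      then show "\<phi> x = 0" by (simp add: \<phi>_def)
    qed
    moreover have "indicator K x \<le> \<phi> x" for x
    proof (cases "x \<in> K")
      case True
      then have "b x = 0" "0 < a x" using apos K by (auto simp: b_def infdist_zero)
      then show ?thesis using True by (simp add: \<phi>_def)
    next
      case False
      then show ?thesis using a0[of x] pos[of x] by (simp add: \<phi>_def)
    qed
    ultimately show ?thesis using that by blast
  qed
qed



lemma key:
  fixes h :: "'a::metric_space \<Rightarrow> 'a" and C :: "nat \<Rightarrow> 'a set"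
  assumes cpt: "compact (UNIV::'a set)" and hom: "homeomorphism UNIV UNIV h g"
    and cl: "\<And>n. closed (C n)" and dec: "\<And>n. C (Suc n) \<subseteq> C n"
    and null: "\<forall>\<mu>\<in>inv_prob_measures h. emeasure \<mu> (\<Inter>n. C n) = 0" and e: "\<epsilon> > 0"
  shows "\<exists>n. \<forall>\<mu>\<in>inv_prob_measures h. measure \<mu> (C n) < \<epsilon>"
proof (rule ccontr)
  assume "\<not> ?thesis"
  then have ex: "\<forall>n. \<exists>\<mu>\<in>inv_prob_measures h. \<epsilon> \<le> measure \<mu> (C n)" by (auto simp: not_less)
  have ch: "continuous_on UNIV h" using hom by (simp add: homeomorphism_def)
  have decC: "m \<le> n \<Longrightarrow> C n \<subseteq> C m" for m n
    using decseqD[OF decseq_SucI[of C, OF dec]] by blast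
  have invD: "prob_space \<mu>" "sets \<mu> = sets borel" if "\<mu> \<in> inv_prob_measures h" for \<mu>
    using that by (auto simp: inv_prob_measures_def)
  define Ms where "Ms n = {\<mu>\<in>inv_prob_measures h. \<epsilon> \<le> measure \<mu> (C n)}" for n
  have Ms_ne: "\<exists>\<mu>. \<mu> \<in> Ms n" for n using ex by (auto simp: Ms_def)
  have Ms_inv: "\<mu> \<in> Ms n \<Longrightarrow> \<mu> \<in> inv_prob_measures h" for \<mu> n by (simp add: Ms_def)
  have Ms_mono: "Ms n \<subseteq> Ms m" if "m \<le> n" for m n
  proof
    fix \<mu> assume \<mu>: "\<mu> \<in> Ms n"
    then have i: "\<mu> \<in> inv_prob_measures h" by (simp add: Ms_def)
    have "C m \<in> sets \<mu>" using invD(2)[OF i] cl by simp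
    then have "measure \<mu> (C n) \<le> measure \<mu> (C m)"
      using finite_measure.finite_measure_mono[OF prob_space.finite_measure[OF invD(1)[OF i]] decC[OF that]]
      by blast
    then show "\<mu> \<in> Ms m" using \<mu> by (auto simp: Ms_def)
  qed
  define \<Phi> where "\<Phi> \<mu> = (\<lambda>f :: 'a \<Rightarrow> real. if continuous_on UNIV f then integral\<^sup>L \<mu> f else 0)" for \<mu> :: "'a measure"
  define bd where "bd f = (if continuous_on UNIV f then (SOME B. \<forall>x. \<bar>f x\<bar> \<le> B) else 0)" for f :: "'a \<Rightarrow> real"
  have bd: "\<forall>x. \<bar>f x\<bar> \<le> bd f" if "continuous_on UNIV f" for f
    using someI_ex[OF cont_bounded[OF cpt that]] that unfolding bd_def by simp
  define Box where "Box = Pi UNIV (\<lambda>f. {-bd f..bd f})"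
  have cBox: "compact Box"
  proof -
    have "compactin (product_topology (\<lambda>_. euclidean) UNIV) (PiE UNIV (\<lambda>f. {-bd f..bd f}))"
      by (simp add: compactin_PiE)
    then show ?thesis unfolding Box_def euclidean_product_topology PiE_UNIV_domain by simp
  qed
  have \<Phi>box: "\<Phi> \<mu> \<in> Box" if "\<mu> \<in> inv_prob_measures h" for \<mu>
    unfolding Box_def
  proof (rule Pi_I)
    fix f :: "'a \<Rightarrow> real" assume "f \<in> UNIV"
    show "\<Phi> \<mu> f \<in> {-bd f..bd f}"
    proof (cases "continuous_on UNIV f")
      case True
      have "\<bar>integral\<^sup>L \<mu> f\<bar> \<le> bd f"
        by (rule integral_bound[OF cpt True invD[OF that] bd[OF True]])
      then show ?thesis using True by (simp add: \<Phi>_def abs_le_iff)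
    next
      case False
      then show ?thesis by (simp add: \<Phi>_def bd_def)
    qed
  qed
  define T where "T n = closure (\<Phi> ` Ms n)" for n
  have "Box \<inter> \<Inter>(T ` UNIV) \<noteq> {}"
  proof (rule compact_imp_fip_image[OF cBox])
    show "closed (T i)" for i by (simp add: T_def)
    fix I' :: "nat set" assume "finite I'" "I' \<subseteq> UNIV"
    then obtain k where k: "I' \<subseteq> {..<k}" using finite_nat_bounded by blast
    obtain \<mu> where \<mu>: "\<mu> \<in> Ms k" using Ms_ne by blast
    have "\<Phi> \<mu> \<in> Box" using \<Phi>box Ms_inv \<mu> by blast
    moreover have "\<Phi> \<mu> \<in> T i" if "i \<in> I'" for i
    proof -
      have "i \<le> k" using k that by auto
      then have "\<mu> \<in> Ms i" using Ms_mono \<mu> by blast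
      then show ?thesis unfolding T_def by (intro subsetD[OF closure_subset]) simp
    qed
    ultimately show "Box \<inter> \<Inter>(T ` I') \<noteq> {}" by blast
  qed
  then obtain L where L: "\<And>n. L \<in> closure (\<Phi> ` Ms n)" by (auto simp: T_def)
  have transfer: "L \<in> P" if "closed P" "\<And>\<mu>. \<mu> \<in> Ms n \<Longrightarrow> \<Phi> \<mu> \<in> P" for P n
    using closure_minimal[of "\<Phi> ` Ms n" P] L[of n] that by blast
  have cproj: "continuous_on UNIV (\<lambda>L::('a\<Rightarrow>real)\<Rightarrow>real. L f)" for f
    by (rule continuous_on_product_coordinates)
  have integ: "integrable \<mu> f" if "\<mu> \<in> inv_prob_measures h" "continuous_on UNIV f" for \<mu> and f :: "'a \<Rightarrow> real"
    using cont_integrable[OF cpt that(2) invD[OF that(1)]] .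
  interpret posfun L
  proof
    show "compact (UNIV :: 'a set)" by (rule cpt)
  next
    fix f g :: "'a \<Rightarrow> real" assume cf: "continuous_on UNIV f" and cg: "continuous_on UNIV g"
    have cfg: "continuous_on UNIV (\<lambda>x. f x + g x)" using cf cg by (intro continuous_intros)
    show "L (\<lambda>x. f x + g x) = L f + L g"
    proof (rule transfer[of "{L. L (\<lambda>x. f x + g x) = L f + L g}" 0, simplified])
      show "closed {L::('a\<Rightarrow>real)\<Rightarrow>real. L (\<lambda>x. f x + g x) = L f + L g}"
        by (intro closed_Collect_eq continuous_on_add cproj)
      fix \<mu> assume "\<mu> \<in> Ms 0"
      then have i: "\<mu> \<in> inv_prob_measures h" by (rule Ms_inv)
      show "\<Phi> \<mu> (\<lambda>x. f x + g x) = \<Phi> \<mu> f + \<Phi> \<mu> g"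
        using cf cg cfg Bochner_Integration.integral_add[OF integ[OF i cf] integ[OF i cg]]
        by (simp add: \<Phi>_def)
    qed
  next
    fix f g :: "'a \<Rightarrow> real" assume cf: "continuous_on UNIV f" and cg: "continuous_on UNIV g"
      and le: "\<And>x. f x \<le> g x"
    show "L f \<le> L g"
    proof (rule transfer[of "{L. L f \<le> L g}" 0, simplified])
      show "closed {L::('a\<Rightarrow>real)\<Rightarrow>real. L f \<le> L g}"
        by (intro closed_Collect_le cproj)
      fix \<mu> assume "\<mu> \<in> Ms 0"
      then have i: "\<mu> \<in> inv_prob_measures h" by (rule Ms_inv)
      show "\<Phi> \<mu> f \<le> \<Phi> \<mu> g"
        using cf cg integral_mono[OF integ[OF i cf] integ[OF i cg] le]
        by (simp add: \<Phi>_def)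
    qed
  next
    fix c :: real
    show "L (\<lambda>x. c) = c"
    proof (rule transfer[of "{L. L (\<lambda>x. c) = c}" 0, simplified])
      show "closed {L::('a\<Rightarrow>real)\<Rightarrow>real. L (\<lambda>x. c) = c}"
        by (intro closed_Collect_eq cproj continuous_on_const)
      fix \<mu> assume "\<mu> \<in> Ms 0"
      then have i: "\<mu> \<in> inv_prob_measures h" by (rule Ms_inv)
      show "\<Phi> \<mu> (\<lambda>x. c) = c"
        using integral_const_prob[OF invD(1)[OF i]] by (simp add: \<Phi>_def)
    qed
  qed
  have Linv: "L (\<lambda>x. f (h x)) = L f" if cf: "continuous_on UNIV f" for f
  proof (rule transfer[of "{L. L (\<lambda>x. f (h x)) = L f}" 0, simplified])
    show "closed {L::('a\<Rightarrow>real)\<Rightarrow>real. L (\<lambda>x. f (h x)) = L f}"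
      by (intro closed_Collect_eq cproj)
    fix \<mu> assume "\<mu> \<in> Ms 0"
    then have i: "\<mu> \<in> inv_prob_measures h" by (rule Ms_inv)
    have cfh: "continuous_on UNIV (\<lambda>x. f (h x))" using continuous_on_compose2[OF cf ch] by simp
    show "\<Phi> \<mu> (\<lambda>x. f (h x)) = \<Phi> \<mu> f"
      using cf cfh integral_inv[OF cpt cf i ch] by (simp add: \<Phi>_def)
  qed
  obtain M where M: "M \<in> inv_prob_measures h" "\<forall>A\<in>sets borel. emeasure M A = ennreal (ostar L A)"
    using inv_measure[OF hom Linv] by blast
  have "\<epsilon> \<le> ostar L (\<Inter>n. C n)"
  proof (rule ostar_greatest)
    fix W assume W: "open W" "(\<Inter>n. C n) \<subseteq> W"
    have "UNIV \<inter> \<Inter>((\<lambda>i. C i - W) ` UNIV) = {}" using W(2) by blast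
    then obtain I' where I': "finite I'" "UNIV \<inter> \<Inter>((\<lambda>i. C i - W) ` I') = {}"
      using compact_imp_fip_image[OF cpt, of UNIV "\<lambda>i. C i - W"] cl W(1)
      by (metis closed_Diff subset_UNIV)
    obtain m where m: "I' \<subseteq> {..<m}" using finite_nat_bounded[OF I'(1)] by blast
    have Cm: "C m \<subseteq> W"
    proof
      fix x assume x: "x \<in> C m"
      show "x \<in> W"
      proof (rule ccontr)
        assume xW: "x \<notin> W"
        have "x \<in> C i - W" if "i \<in> I'" for i
        proof -
          have "i \<le> m" using m that by auto
          then show ?thesis using x decC[of i m] xW by auto
        qed
        then show False using I'(2) by blast
      qed
    qed
    obtain \<phi> where \<phi>: "\<phi> \<in> adm W" "\<And>x. indicator (C m) x \<le> \<phi> x"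
      using urysohn_adm[OF W(1) cl Cm] by blast
    have c\<phi>: "continuous_on UNIV \<phi>" using \<phi>(1) by (simp add: adm_def)
    have "\<epsilon> \<le> L \<phi>"
    proof (rule transfer[of "{L. \<epsilon> \<le> L \<phi>}" m, simplified])
      show "closed {L::('a\<Rightarrow>real)\<Rightarrow>real. \<epsilon> \<le> L \<phi>}"
        by (intro closed_Collect_le cproj continuous_on_const)
      fix \<mu> assume \<mu>: "\<mu> \<in> Ms m"
      then have i: "\<mu> \<in> inv_prob_measures h" by (rule Ms_inv)
      have sp: "space \<mu> = UNIV" using sets_eq_imp_space_eq[OF invD(2)[OF i]] by simp
      have Cs: "C m \<in> sets \<mu>" using invD(2)[OF i] cl by simp
      have ii: "integrable \<mu> (indicator (C m) :: 'a \<Rightarrow> real)"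
        using Cs prob_space.emeasure_le_1[OF invD(1)[OF i], of "C m"]
        by (intro integrable_real_indicator) (auto simp: order_le_less_trans[OF _ ennreal_less_top[of 1]])
      have "\<epsilon> \<le> measure \<mu> (C m)" using \<mu> by (simp add: Ms_def)
      also have "measure \<mu> (C m) = integral\<^sup>L \<mu> (indicator (C m))"
        using Bochner_Integration.integral_indicator[of \<mu> "C m"] sp by simp
      also have "\<dots> \<le> integral\<^sup>L \<mu> \<phi>"
        by (rule integral_mono[OF ii integ[OF i c\<phi>]]) (use \<phi>(2) in simp)
      finally show "\<epsilon> \<le> \<Phi> \<mu> \<phi>" using c\<phi> by (simp add: \<Phi>_def)
    qed
    then show "\<epsilon> \<le> nu L W" using nu_ge[OF \<phi>(1)] by linarith
  qed
  moreover have "(\<Inter>n. C n) \<in> sets borel" using cl by (simp add: borel_closed closed_INT)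
  ultimately have "ennreal \<epsilon> \<le> emeasure M (\<Inter>n. C n)" using M(2) by (simp add: ennreal_leI)
  then show False using null M(1) e by simp
qed



lemma meas_mono:
  assumes "\<mu> \<in> inv_prob_measures h" "A \<subseteq> B" "B \<in> sets borel"
  shows "measure \<mu> A \<le> measure \<mu> B"
proof -
  have p: "prob_space \<mu>" and s: "sets \<mu> = sets borel" using assms(1) by (auto simp: inv_prob_measures_def)
  show ?thesis
    using finite_measure.finite_measure_mono[OF prob_space.finite_measure[OF p] assms(2)] assms(3) s by simp
qed

lemma key2:
  fixes h :: "'a::metric_space \<Rightarrow> 'a"
  assumes cpt: "compact (UNIV::'a set)" and hom: "homeomorphism UNIV UNIV h g"
    and S: "closed S" "S \<noteq> {}" and T: "closed T" and un: "universally_null h (S \<inter> T)" and e: "\<epsilon> > 0"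
  shows "\<exists>\<delta>>0. \<forall>\<mu>\<in>inv_prob_measures h. measure \<mu> ({x. infdist x S \<le> \<delta>} \<inter> T) < \<epsilon>"
proof -
  define C where "C n = {x. infdist x S \<le> 1 / real (Suc n)} \<inter> T" for n
  have cl: "closed (C n)" for n
    unfolding C_def by (intro closed_Int T closed_Collect_le continuous_intros)
  have dec: "C (Suc n) \<subseteq> C n" for n
  proof -
    have "1 / real (Suc (Suc n)) \<le> 1 / real (Suc n)" by (simp add: frac_le)
    then show ?thesis unfolding C_def by auto
  qed
  have inter: "(\<Inter>n. C n) = S \<inter> T"
  proof
    show "(\<Inter>n. C n) \<subseteq> S \<inter> T"
    proof
      fix x assume x: "x \<in> (\<Inter>n. C n)"
      then have xT: "x \<in> T" by (auto simp: C_def)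
      have "infdist x S = 0"
      proof (rule ccontr)
        assume "infdist x S \<noteq> 0"
        then have "0 < infdist x S" using infdist_nonneg[of x S] by linarith
        then obtain n where n: "inverse (real (Suc n)) < infdist x S" using reals_Archimedean by blast
        have "x \<in> C n" using x by blast
        then show False using n by (auto simp: C_def inverse_eq_divide)
      qed
      then have "x \<in> S" using in_closure_iff_infdist_zero[OF S(2)] closure_closed[OF S(1)] by simp
      then show "x \<in> S \<inter> T" using xT by simp
    qed
  next
    show "S \<inter> T \<subseteq> (\<Inter>n. C n)" by (auto simp: C_def infdist_zero)
  qed
  have null: "\<forall>\<mu>\<in>inv_prob_measures h. emeasure \<mu> (\<Inter>n. C n) = 0"
    using un unfolding inter universally_null_def by blast
  obtain n where n: "\<forall>\<mu>\<in>inv_prob_measures h. measure \<mu> (C n) < \<epsilon>"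
    using key[OF cpt hom cl dec null e] by blast
  show ?thesis
    by (rule exI[of _ "1 / real (Suc n)"]) (use n in \<open>simp add: C_def\<close>)
qed



lemma cont_funpow:
  assumes "continuous_on UNIV (h :: 'a::topological_space \<Rightarrow> 'a)"
  shows "continuous_on UNIV (h ^^ k)"
proof (induction k)
  case 0
  then show ?case by (simp add: continuous_on_id)
next
  case (Suc k)
  have "h ^^ Suc k = h \<circ> (h ^^ k)" by simp
  then show ?case using continuous_on_compose[OF Suc] assms
    by (metis continuous_on_subset subset_UNIV)
qed

lemma no_periodic:
  fixes h :: "'a::metric_space \<Rightarrow> 'a"
  assumes inf: "infinite (UNIV :: 'a set)" and min: "minimal_map h" and k: "0 < k"
  shows "(h ^^ k) x \<noteq> x"
proof
  assume per: "(h ^^ k) x = x"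
  define A where "A = (\<lambda>i. (h ^^ i) x) ` {..<k}"
  have fin: "finite A" by (simp add: A_def)
  then have "closed A" by (rule finite_imp_closed)
  moreover have "h ` A = A"
  proof
    show "h ` A \<subseteq> A"
    proof
      fix y assume "y \<in> h ` A"
      then obtain i where i: "i < k" "y = h ((h ^^ i) x)" by (auto simp: A_def)
      show "y \<in> A"
      proof (cases "Suc i < k")
        case True
        then show ?thesis using i by (auto simp: A_def intro!: image_eqI[of _ _ "Suc i"])
      next
        case False
        then have "Suc i = k" using i by simp
        then have "y = (h ^^ 0) x" using i per by (metis funpow.simps(2) funpow_0 o_apply)
        then show ?thesis using k by (auto simp: A_def intro!: image_eqI[of _ _ 0])
      qed
    qed
  next
    show "A \<subseteq> h ` A"
    proof
      fix y assume "y \<in> A"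
      then obtain j where j: "j < k" "y = (h ^^ j) x" by (auto simp: A_def)
      show "y \<in> h ` A"
      proof (cases j)
        case 0
        have "y = (h ^^ Suc (k - 1)) x" using j 0 per k by simp
        then have "y = h ((h ^^ (k - 1)) x)" by simp
        moreover have "(h ^^ (k - 1)) x \<in> A" using k by (auto simp: A_def)
        ultimately show ?thesis by blast
      next
        case (Suc j')
        then have "y = h ((h ^^ j') x)" using j by simp
        moreover have "(h ^^ j') x \<in> A" using j Suc by (auto simp: A_def)
        ultimately show ?thesis by blast
      qed
    qed
  qed
  ultimately have "A = {} \<or> A = UNIV" using min by (simp add: minimal_map_def)
  moreover have "x \<in> A" using k by (auto simp: A_def intro!: image_eqI[of _ _ 0])
  ultimately show False using fin inf by auto
qed

lemma part1:
  fixes h :: "'a::metric_space \<Rightarrow> 'a"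
  assumes cpt: "compact (UNIV :: 'a set)" and inf: "infinite (UNIV :: 'a set)"
    and hom: "homeomorphism UNIV UNIV h g" and min: "minimal_map h" and e: "\<epsilon> > 0"
    and U: "open U" "U \<noteq> {}"
  shows "\<exists>E. open E \<and> E \<noteq> {} \<and> E \<subseteq> U \<and> (\<forall>\<mu>\<in>inv_prob_measures h. measure \<mu> E < \<epsilon>)"
proof -
  have ch: "continuous_on UNIV h" using hom by (simp add: homeomorphism_def)
  have chk: "continuous_on UNIV (h ^^ k)" for k by (rule cont_funpow[OF ch])
  obtain x where x: "x \<in> U" using U(2) by blast
  define N :: nat where "N = nat \<lceil>1 / \<epsilon>\<rceil> + 1"
  have N: "1 / \<epsilon> < real N" unfolding N_def by linarith
  have Npos: "0 < N" unfolding N_def by simp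
  have exO: "\<exists>Z. open Z \<and> x \<in> Z \<and> Z \<inter> (h ^^ k) -` Z = {}" if "0 < k" for k
  proof -
    have "(h ^^ k) x \<noteq> x" by (rule no_periodic[OF inf min that])
    then obtain P Q where PQ: "open P" "open Q" "x \<in> P" "(h ^^ k) x \<in> Q" "P \<inter> Q = {}"
      using separation_t2 by metis
    define Z where "Z = P \<inter> (h ^^ k) -` Q"
    have "open ((h ^^ k) -` Q)" using PQ(2) chk[of k] by (simp add: open_vimage)
    then have "open Z" using PQ(1) by (simp add: Z_def open_Int)
    moreover have "x \<in> Z" using PQ by (simp add: Z_def)
    moreover have "Z \<inter> (h ^^ k) -` Z = {}" using PQ(5) by (auto simp: Z_def)
    ultimately show ?thesis by blast
  qed
  define Ob where "Ob k = (SOME Z. open Z \<and> x \<in> Z \<and> Z \<inter> (h ^^ k) -` Z = {})" for k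
  have Ob: "open (Ob k) \<and> x \<in> Ob k \<and> Ob k \<inter> (h ^^ k) -` Ob k = {}" if "0 < k" for k
    unfolding Ob_def by (rule someI_ex) (rule exO[OF that])
  define V where "V = U \<inter> (\<Inter>k\<in>{1..<N}. Ob k)"
  have oV: "open V" unfolding V_def using U(1) Ob by (intro open_Int open_INT) auto
  have xV: "x \<in> V" unfolding V_def using x Ob by auto
  have VU: "V \<subseteq> U" by (auto simp: V_def)
  have Vdisj: "V \<inter> (h ^^ k) -` V = {}" if "0 < k" "k < N" for k
  proof -
    have "V \<subseteq> Ob k" using that by (auto simp: V_def)
    then show ?thesis using Ob[OF that(1)] by blast
  qed
  define S where "S i = (h ^^ i) -` V" for i
  have Sopen: "open (S i)" for i unfolding S_def using oV chk[of i] by (simp add: open_vimage)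
  have Sdisj: "disjoint_family_on S {..<N}"
    unfolding disjoint_family_on_def
  proof (intro ballI impI)
    fix i j assume ij: "i \<in> {..<N}" "j \<in> {..<N}" "i \<noteq> j"
    show "S i \<inter> S j = {}"
    proof (rule ccontr)
      assume "S i \<inter> S j \<noteq> {}"
      then obtain y where y: "(h ^^ i) y \<in> V" "(h ^^ j) y \<in> V" by (auto simp: S_def)
      show False
      proof (cases "i < j")
        case True
        have "(h ^^ j) y = (h ^^ (j - i)) ((h ^^ i) y)"
          using True by (metis funpow_add le_add_diff_inverse2 less_imp_le o_apply)
        then have "(h ^^ i) y \<in> V \<inter> (h ^^ (j - i)) -` V" using y by simp
        moreover have "0 < j - i" "j - i < N" using True ij by auto
        ultimately show False using Vdisj[of "j - i"] by blast
      next
        case False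
        then have ji: "j < i" using ij by simp
        have "(h ^^ i) y = (h ^^ (i - j)) ((h ^^ j) y)"
          using ji by (metis funpow_add le_add_diff_inverse2 less_imp_le o_apply)
        then have "(h ^^ j) y \<in> V \<inter> (h ^^ (i - j)) -` V" using y by simp
        moreover have "0 < i - j" "i - j < N" using ji ij by auto
        ultimately show False using Vdisj[of "i - j"] by blast
      qed
    qed
  qed
  have "measure \<mu> V < \<epsilon>" if \<mu>: "\<mu> \<in> inv_prob_measures h" for \<mu>
  proof -
    have p: "prob_space \<mu>" and s: "sets \<mu> = sets borel"
      and inv: "\<forall>A\<in>sets borel. emeasure \<mu> (h -` A) = emeasure \<mu> A"
      using \<mu> by (auto simp: inv_prob_measures_def)
    have Ssets: "S i \<in> sets \<mu>" for i using Sopen[of i] s by simp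
    have eS: "emeasure \<mu> (S i) = emeasure \<mu> V" for i
    proof (induction i)
      case 0
      then show ?case by (simp add: S_def)
    next
      case (Suc i)
      have "S (Suc i) = h -` S i" by (simp only: S_def funpow_Suc_right vimage_comp)
      then have "emeasure \<mu> (S (Suc i)) = emeasure \<mu> (S i)"
        using inv Ssets[of i] s by simp
      then show ?case using Suc by simp
    qed
    then have mS: "measure \<mu> (S i) = measure \<mu> V" for i by (simp add: measure_def)
    have fin: "emeasure \<mu> (S i) \<noteq> \<infinity>" for i
      using prob_space.emeasure_le_1[OF p, of "S i"] by (auto simp: top_unique)
    have "measure \<mu> (\<Union>i\<in>{..<N}. S i) = (\<Sum>i\<in>{..<N}. measure \<mu> (S i))"
      by (rule measure_finite_Union[OF _ _ Sdisj]) (use Ssets fin in auto)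
    also have "\<dots> = real N * measure \<mu> V" using mS by simp
    finally have "real N * measure \<mu> V \<le> 1"
      using prob_space.prob_le_1[OF p] by metis
    then have "measure \<mu> V \<le> 1 / real N" using Npos by (simp add: field_simps)
    also have "1 / real N < \<epsilon>" using N e Npos by (simp add: field_simps)
    finally show ?thesis .
  qed
  then show ?thesis using oV xV VU by blast
qed



theorem corollary2p5:
  fixes h :: "'a::metric_space \<Rightarrow> 'a" and \<epsilon> :: real
  assumes "compact (UNIV :: 'a set)"
    and "infinite (UNIV :: 'a set)"
    and "\<exists>g. homeomorphism UNIV UNIV h g"
    and "minimal_map h"
    and "\<epsilon> > 0"
  shows "(\<forall>U. open U \<and> U \<noteq> {} \<longrightarrow>
            (\<exists>E. open E \<and> E \<noteq> {} \<and> E \<subseteq> U \<and>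
                 (\<forall>\<mu>\<in>inv_prob_measures h. measure \<mu> E < \<epsilon>)))
       \<and> (\<forall>U. open U \<and> U \<noteq> {} \<and> universally_null h (frontier U) \<longrightarrow>
            (\<exists>K. closed K \<and> K \<subseteq> U \<and> interior K \<noteq> {} \<and>
                 (\<forall>\<mu>\<in>inv_prob_measures h. measure \<mu> (U - K) < \<epsilon>)))
       \<and> (\<forall>U. open U \<and> U \<noteq> {} \<and> universally_null h (frontier U) \<longrightarrow>
            (\<exists>E. open E \<and> E \<subseteq> U \<and> closure E \<subseteq> U \<and>
                 (\<forall>\<mu>\<in>inv_prob_measures h. measure \<mu> (U - closure E) < \<epsilon>)))
       \<and> (\<forall>K. closed K \<and> universally_null h (frontier K) \<longrightarrow>
            (\<exists>E. open E \<and> K \<subseteq> E \<and>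
                 (\<forall>\<mu>\<in>inv_prob_measures h. measure \<mu> (E - K) < \<epsilon>)))"
proof -
  note cpt = assms(1) and inf = assms(2) and min = assms(4) and e = assms(5)
  obtain g where hom: "homeomorphism UNIV UNIV h g" using assms(3) by blast
  have P1: "\<exists>E. open E \<and> E \<noteq> {} \<and> E \<subseteq> U \<and> (\<forall>\<mu>\<in>inv_prob_measures h. measure \<mu> E < \<epsilon>)"
    if "open U" "U \<noteq> {}" for U
    by (rule part1[OF cpt inf hom min e that])
  have P2: "\<exists>K. closed K \<and> K \<subseteq> U \<and> interior K \<noteq> {} \<and>
                 (\<forall>\<mu>\<in>inv_prob_measures h. measure \<mu> (U - K) < \<epsilon>)"
    if U: "open U" "U \<noteq> {}" "universally_null h (frontier U)" for U
  proof (cases "U = UNIV")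
    case True
    then show ?thesis using e by (intro exI[of _ UNIV]) auto
  next
    case False
    have cS: "closed (- U)" using U(1) by auto
    have neS: "- U \<noteq> {}" using False by auto
    have fr: "- U \<inter> closure U = frontier U" using U(1) by (auto simp: frontier_def interior_open)
    obtain \<delta> where \<delta>: "\<delta> > 0" "\<forall>\<mu>\<in>inv_prob_measures h. measure \<mu> ({x. infdist x (- U) \<le> \<delta>} \<inter> closure U) < \<epsilon>"
      using key2[OF cpt hom cS neS closed_closure _ e] U(3) fr by metis
    obtain x0 where x0: "x0 \<in> U" using U(2) by blast
    define r where "r = infdist x0 (- U)"
    have r: "0 < r" unfolding r_def using infdist_pos_not_in_closed[OF cS neS] x0 by auto
    define d where "d = min \<delta> (r / 2)"
    have d: "0 < d" "d \<le> \<delta>" "d < r" using \<delta> r by (auto simp: d_def)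
    define K where "K = {x. d \<le> infdist x (- U)}"
    have cK: "closed K" unfolding K_def by (intro closed_Collect_le continuous_intros)
    have KU: "K \<subseteq> U"
    proof
      fix x assume "x \<in> K"
      then have "0 < infdist x (- U)" using d by (auto simp: K_def)
      then show "x \<in> U" by (metis ComplI infdist_zero less_irrefl)
    qed
    have "open {x. d < infdist x (- U)}" by (intro open_Collect_less continuous_intros)
    moreover have "{x. d < infdist x (- U)} \<subseteq> K" by (auto simp: K_def)
    ultimately have "{x. d < infdist x (- U)} \<subseteq> interior K" using interior_maximal by blast
    moreover have "x0 \<in> {x. d < infdist x (- U)}" using d r_def by simp
    ultimately have intK: "interior K \<noteq> {}" by blast
    have sub: "U - K \<subseteq> {x. infdist x (- U) \<le> \<delta>} \<inter> closure U"
      using d closure_subset by (auto simp: K_def)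
    have bor: "{x. infdist x (- U) \<le> \<delta>} \<inter> closure U \<in> sets borel"
      by (intro borel_closed closed_Int closed_Collect_le continuous_intros closed_closure)
    have "\<forall>\<mu>\<in>inv_prob_measures h. measure \<mu> (U - K) < \<epsilon>"
      using meas_mono[OF _ sub bor] \<delta>(2) by (meson le_less_trans)
    then show ?thesis using cK KU intK by blast
  qed
  have P3: "\<exists>E. open E \<and> E \<subseteq> U \<and> closure E \<subseteq> U \<and>
                 (\<forall>\<mu>\<in>inv_prob_measures h. measure \<mu> (U - closure E) < \<epsilon>)"
    if U: "open U" "U \<noteq> {}" "universally_null h (frontier U)" for U
  proof (cases "U = UNIV")
    case True
    then show ?thesis using e by (intro exI[of _ UNIV]) auto
  next
    case False
    have cS: "closed (- U)" using U(1) by auto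
    have neS: "- U \<noteq> {}" using False by auto
    have fr: "- U \<inter> closure U = frontier U" using U(1) by (auto simp: frontier_def interior_open)
    obtain \<delta> where \<delta>: "\<delta> > 0" "\<forall>\<mu>\<in>inv_prob_measures h. measure \<mu> ({x. infdist x (- U) \<le> \<delta>} \<inter> closure U) < \<epsilon>"
      using key2[OF cpt hom cS neS closed_closure _ e] U(3) fr by metis
    define E where "E = {x. \<delta> < infdist x (- U)}"
    have oE: "open E" unfolding E_def by (intro open_Collect_less continuous_intros)
    have cl: "closure E \<subseteq> {x. \<delta> \<le> infdist x (- U)}"
      by (rule closure_minimal) (auto simp: E_def intro!: closed_Collect_le continuous_intros)
    have "{x. \<delta> \<le> infdist x (- U)} \<subseteq> U"
    proof
      fix x assume "x \<in> {x. \<delta> \<le> infdist x (- U)}"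
      then have "0 < infdist x (- U)" using \<delta> by auto
      then show "x \<in> U" by (metis ComplI infdist_zero less_irrefl)
    qed
    then have cEU: "closure E \<subseteq> U" using cl by blast
    have EU: "E \<subseteq> U" using cEU closure_subset by blast
    have sub: "U - closure E \<subseteq> {x. infdist x (- U) \<le> \<delta>} \<inter> closure U"
    proof
      fix x assume x: "x \<in> U - closure E"
      then have "x \<notin> E" using closure_subset[of E] by blast
      then show "x \<in> {x. infdist x (- U) \<le> \<delta>} \<inter> closure U"
        using x closure_subset[of U] by (auto simp: E_def not_less)
    qed
    have bor: "{x. infdist x (- U) \<le> \<delta>} \<inter> closure U \<in> sets borel"
      by (intro borel_closed closed_Int closed_Collect_le continuous_intros closed_closure)
    have "\<forall>\<mu>\<in>inv_prob_measures h. measure \<mu> (U - closure E) < \<epsilon>"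
      using meas_mono[OF _ sub bor] \<delta>(2) by (meson le_less_trans)
    then show ?thesis using oE EU cEU by blast
  qed
  have P4: "\<exists>E. open E \<and> K \<subseteq> E \<and> (\<forall>\<mu>\<in>inv_prob_measures h. measure \<mu> (E - K) < \<epsilon>)"
    if K: "closed K" "universally_null h (frontier K)" for K
  proof (cases "K = {}")
    case True
    then show ?thesis using e by (intro exI[of _ "{}"]) auto
  next
    case False
    have fr: "K \<inter> closure (- K) = frontier K" using K(1)
      by (auto simp: frontier_def closure_complement closure_closed)
    obtain \<delta> where \<delta>: "\<delta> > 0" "\<forall>\<mu>\<in>inv_prob_measures h. measure \<mu> ({x. infdist x K \<le> \<delta>} \<inter> closure (- K)) < \<epsilon>"
      using key2[OF cpt hom K(1) False closed_closure _ e] K(2) fr by metis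
    define E where "E = {x. infdist x K < \<delta>}"
    have oE: "open E" unfolding E_def by (intro open_Collect_less continuous_intros)
    have KE: "K \<subseteq> E" using \<delta>(1) by (auto simp: E_def infdist_zero)
    have sub: "E - K \<subseteq> {x. infdist x K \<le> \<delta>} \<inter> closure (- K)"
      using closure_subset[of "- K"] by (auto simp: E_def)
    have bor: "{x. infdist x K \<le> \<delta>} \<inter> closure (- K) \<in> sets borel"
      by (intro borel_closed closed_Int closed_Collect_le continuous_intros closed_closure)
    have "\<forall>\<mu>\<in>inv_prob_measures h. measure \<mu> (E - K) < \<epsilon>"
      using meas_mono[OF _ sub bor] \<delta>(2) by (meson le_less_trans)
    then show ?thesis using oE KE by blast
  qed
  show ?thesis
    apply (intro conjI allI impI)
    subgoal for U using P1[of U] by (elim conjE) simp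
    subgoal for U using P2[of U] by (elim conjE) simp
    subgoal for U using P3[of U] by (elim conjE) simp
    subgoal for K using P4[of K] by (elim conjE) simp
    done
qed


end
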